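(* Let $n,m,d,k$ be positive integers with $k\le 2^{m-1}$, and let $N=2^n$ (with $N$ large and $d,k\le\sqrt N$). Consider the following decision problem. For a function $f:\{0,1\}^n\to\{0,1\}^m$, let $F=f^{\otimes d}:\{0,1\}^{dn}\to\{0,1\}^{dm}$ be given by $F(x_1,\dots,x_d)=(f(x_1),\dots,f(x_d))$. The algorithm is given access to $F$ only through the oracle unitary $T_F$ acting on $(dn+dm)$ qubits by $T_F\ket{x}\ket{z}=\ket{x}\ket{z\oplus F(x)}$ for $x\in\{0,1\}^{dn}$, $z\in\{0,1\}^{dm}$. It is also given $k$ distinct items $y_1,\dots,y_k\in\{0,1\}^m$. It is promised that either all of the $y_i$ lie in the image of $f$, or exactly $k-1$ of them do, and it must decide (correctly with probability at least $3/4$) whether all $y_i$ lie in the image of $f$. Then every quantum circuit solving this problem uses \[\Omega\left(\sqrt{\frac{Nk}{d\min\{d,k\}}}\right)\] applications of $T_F$.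
   Context: An item $y\in\{0,1\}^m$ is "in the database $f$" if $f(x)=y$ for some $x\in\{0,1\}^n$. Note that $T_F=T_f^{\otimes d}$ up to reordering of qubits, where $T_f\ket{x}\ket{z}=\ket{x}\ket{z\oplus f(x)}$; thus one application of $T_F$ is a parallel query to $d$ copies of the database $f$. The complexity measure is the number of applications of $T_F$; other unitaries (independent of $f$) are free. *)

theory Defs
  imports Complex_Main
begin

text \<open>Bit strings are lists of booleans; a bit string in {0,1}^L is a list of length L.
  f : {0,1}^n -> {0,1}^m is a function on bool lists with length (f x) = m for length x = n.\<close>

definition xor_bits :: "bool list \<Rightarrow> bool list \<Rightarrow> bool list" where
  "xor_bits a b = map2 (\<noteq>) a b"

fun blocks :: "nat \<Rightarrow> nat \<Rightarrow> 'a list \<Rightarrow> 'a list list" where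
  "blocks 0 n xs = []"
| "blocks (Suc d) n xs = take n xs # blocks d n (drop n xs)"

definition tensor_fun :: "nat \<Rightarrow> nat \<Rightarrow> (bool list \<Rightarrow> bool list) \<Rightarrow> bool list \<Rightarrow> bool list" where
  "tensor_fun d n f x = concat (map f (blocks d n x))"

text \<open>Computational basis of the whole register: query register |x>|z> (dn + dm qubits)
  together with a workspace register of dimension W.\<close>
type_synonym basis = "bool list \<times> bool list \<times> nat"
type_synonym state = "basis \<Rightarrow> complex"
type_synonym op = "basis \<Rightarrow> basis \<Rightarrow> complex"

definition Basis :: "nat \<Rightarrow> nat \<Rightarrow> nat \<Rightarrow> nat \<Rightarrow> basis set" where
  "Basis d n m W = {(x, z, w). length x = d * n \<and> length z = d * m \<and> w < W}"

definition apply_op :: "basis set \<Rightarrow> op \<Rightarrow> state \<Rightarrow> state" where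
  "apply_op B U \<psi> = (\<lambda>b. \<Sum>b'\<in>B. U b b' * \<psi> b')"

definition unitary_on :: "basis set \<Rightarrow> op \<Rightarrow> bool" where
  "unitary_on B U \<longleftrightarrow> (\<forall>b\<in>B. \<forall>b'\<in>B.
      (\<Sum>c\<in>B. cnj (U c b) * U c b') = (if b = b' then 1 else 0))"

text \<open>Query T_F |x>|z>|w> = |x>|z xor F(x)>|w>, acting on amplitudes.\<close>
definition query_op :: "(bool list \<Rightarrow> bool list) \<Rightarrow> state \<Rightarrow> state" where
  "query_op F \<psi> = (\<lambda>(x, z, w). \<psi> (x, xor_bits z (F x), w))"

text \<open>Run U_0, then T_F, U_1, then T_F, U_2, ...: a list of T+1 unitaries uses T query_op calls.\<close>
fun run :: "basis set \<Rightarrow> (bool list \<Rightarrow> bool list) \<Rightarrow> op list \<Rightarrow> state \<Rightarrow> state" where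
  "run B F [] \<psi> = \<psi>"
| "run B F [U] \<psi> = apply_op B U \<psi>"
| "run B F (U # V # Us) \<psi> = run B F (V # Us) (query_op F (apply_op B U \<psi>))"

definition init_state :: "nat \<Rightarrow> nat \<Rightarrow> nat \<Rightarrow> state" where
  "init_state d n m = (\<lambda>b. if b = (replicate (d * n) False, replicate (d * m) False, 0) then 1 else 0)"

definition accept_prob ::
  "nat \<Rightarrow> nat \<Rightarrow> nat \<Rightarrow> nat \<Rightarrow> (bool list \<Rightarrow> bool list) \<Rightarrow> op list \<Rightarrow> basis set \<Rightarrow> real" where
  "accept_prob d n m W f Us acc =
     (let B = Basis d n m W;
          \<psi> = run B (tensor_fun d n f) Us (init_state d n m)
      in \<Sum>b\<in>B \<inter> acc. (cmod (\<psi> b))\<^sup>2)"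

definition valid_fun :: "nat \<Rightarrow> nat \<Rightarrow> (bool list \<Rightarrow> bool list) \<Rightarrow> bool" where
  "valid_fun n m f \<longleftrightarrow> (\<forall>x. length x = n \<longrightarrow> length (f x) = m)"

definition image_fun :: "nat \<Rightarrow> (bool list \<Rightarrow> bool list) \<Rightarrow> bool list set" where
  "image_fun n f = f ` {x. length x = n}"

definition valid_items :: "nat \<Rightarrow> nat \<Rightarrow> bool list list \<Rightarrow> bool" where
  "valid_items m k ys \<longleftrightarrow> length ys = k \<and> distinct ys \<and> (\<forall>y\<in>set ys. length y = m)"

text \<open>An algorithm: for each input list of k items ys, a workspace dimension W ys \<ge> 1,
  T+1 unitaries Us ys (so exactly T applications of T_F), and an accepting set acc ys
  of computational basis states.\<close>
definition solves ::
  "nat \<Rightarrow> nat \<Rightarrow> nat \<Rightarrow> nat \<Rightarrow> nat \<Rightarrow> (bool list list \<Rightarrow> nat) \<Rightarrow> (bool list list \<Rightarrow> op list)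
   \<Rightarrow> (bool list list \<Rightarrow> basis set) \<Rightarrow> bool" where
  "solves n m d k T W Us acc \<longleftrightarrow>
     (\<forall>ys. valid_items m k ys \<longrightarrow>
        W ys \<ge> 1 \<and> length (Us ys) = T + 1 \<and>
        (\<forall>U\<in>set (Us ys). unitary_on (Basis d n m (W ys)) U) \<and>
        (\<forall>f. valid_fun n m f \<longrightarrow>
           (set ys \<subseteq> image_fun n f \<longrightarrow> accept_prob d n m (W ys) f (Us ys) (acc ys) \<ge> 3/4) \<and>
           (card (set ys \<inter> image_fun n f) = k - 1 \<longrightarrow>
              accept_prob d n m (W ys) f (Us ys) (acc ys) \<le> 1/4)))"

end

theory Submission
  imports Defs "HOL-Analysis.Convex" "HOL-Library.FuncSet"
begin


definition ip :: "basis set \<Rightarrow> state \<Rightarrow> state \<Rightarrow> complex" where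
  "ip B \<psi> \<phi> = (\<Sum>b\<in>B. cnj (\<psi> b) * \<phi> b)"

definition nrm :: "basis set \<Rightarrow> state \<Rightarrow> real" where
  "nrm B \<psi> = (\<Sum>b\<in>B. (cmod (\<psi> b))\<^sup>2)"

lemma ip_self: "ip B \<psi> \<psi> = of_real (nrm B \<psi>)"
  unfolding ip_def nrm_def of_real_sum complex_norm_square by (simp add: mult.commute)

lemma unitary_ip:
  assumes fin: "finite B" and U: "unitary_on B U"
  shows "ip B (apply_op B U \<psi>) (apply_op B U \<phi>) = ip B \<psi> \<phi>"
proof -
  have "ip B (apply_op B U \<psi>) (apply_op B U \<phi>) =
     (\<Sum>c\<in>B. (\<Sum>b\<in>B. cnj (U c b) * cnj (\<psi> b)) * (\<Sum>b'\<in>B. U c b' * \<phi> b'))"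
    unfolding ip_def apply_op_def by (simp add: cnj_sum)
  also have "\<dots> = (\<Sum>c\<in>B. \<Sum>b\<in>B. \<Sum>b'\<in>B. cnj (\<psi> b) * \<phi> b' * (cnj (U c b) * U c b'))"
    apply (rule sum.cong[OF refl])
    apply (subst sum_product)
    apply (intro sum.cong[OF refl])
    by (simp add: mult_ac)
  also have "\<dots> = (\<Sum>b\<in>B. \<Sum>b'\<in>B. \<Sum>c\<in>B. cnj (\<psi> b) * \<phi> b' * (cnj (U c b) * U c b'))"
    apply (rule trans[OF sum.swap])
    apply (rule sum.cong[OF refl])
    by (rule sum.swap)
  also have "\<dots> = (\<Sum>b\<in>B. \<Sum>b'\<in>B. cnj (\<psi> b) * \<phi> b' * (if b = b' then 1 else 0))"
    using U unfolding unitary_on_def by (simp add: sum_distrib_left[symmetric])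
  also have "\<dots> = ip B \<psi> \<phi>"
    unfolding ip_def using fin by (simp add: if_distrib cong: if_cong)
  finally show ?thesis .
qed

lemma unitary_nrm:
  assumes "finite B" "unitary_on B U"
  shows "nrm B (apply_op B U \<psi>) = nrm B \<psi>"
  using unitary_ip[OF assms, of \<psi> \<psi>] by (simp add: ip_self)


lemma fin_len: "finite {xs::bool list. length xs = k}"
  using finite_lists_length_eq[of "UNIV::bool set" k] by simp

lemma card_len: "card {xs::bool list. length xs = k} = 2 ^ k"
  using card_lists_length_eq[of "UNIV::bool set" k] by (simp add: card_UNIV_bool)

lemma length_xor[simp]: "length (xor_bits a b) = min (length a) (length b)"
  by (simp add: xor_bits_def)

lemma xor_invol: "length z = length v \<Longrightarrow> xor_bits (xor_bits z v) v = z"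
proof (induction z arbitrary: v)
  case Nil then show ?case by (simp add: xor_bits_def)
next
  case (Cons a z) then show ?case by (cases v) (auto simp: xor_bits_def)
qed

definition ZW :: "nat \<Rightarrow> nat \<Rightarrow> (bool list \<times> nat) set" where
  "ZW L W = {z. length z = L} \<times> {..<W}"

lemma fin_ZW: "finite (ZW L W)" unfolding ZW_def using fin_len by simp

lemma Basis_eq: "Defs.Basis d n m W = {x. length x = d * n} \<times> ZW (d*m) W"
  unfolding Basis_def ZW_def by auto

lemma fin_Basis: "finite (Defs.Basis d n m W)"
  unfolding Basis_eq using fin_len fin_ZW by simp

lemma ZW_reindex:
  assumes "length v = L"
  shows "(\<Sum>p\<in>ZW L W. h (xor_bits (fst p) v, snd p)) = (\<Sum>p\<in>ZW L W. h p)"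
  apply (rule sum.reindex_bij_witness[where i="\<lambda>p. (xor_bits (fst p) v, snd p)"
          and j="\<lambda>p. (xor_bits (fst p) v, snd p)"])
  using assms by (auto simp: ZW_def xor_invol)

definition ipx :: "(bool list \<times> nat) set \<Rightarrow> bool list \<Rightarrow> state \<Rightarrow> state \<Rightarrow> complex" where
  "ipx P x \<psi> \<phi> = (\<Sum>p\<in>P. cnj (\<psi> (x, p)) * \<phi> (x, p))"

definition nx :: "(bool list \<times> nat) set \<Rightarrow> bool list \<Rightarrow> state \<Rightarrow> real" where
  "nx P x \<psi> = (\<Sum>p\<in>P. (cmod (\<psi> (x, p)))\<^sup>2)"

lemma ip_split: "finite X \<Longrightarrow> finite P \<Longrightarrow> ip (X \<times> P) \<psi> \<phi> = (\<Sum>x\<in>X. ipx P x \<psi> \<phi>)"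
  unfolding ip_def ipx_def by (simp add: sum.cartesian_product case_prod_eta)

lemma nrm_split: "finite X \<Longrightarrow> finite P \<Longrightarrow> nrm (X \<times> P) \<psi> = (\<Sum>x\<in>X. nx P x \<psi>)"
  unfolding nrm_def nx_def by (simp add: sum.cartesian_product case_prod_eta)

lemma nx_nonneg: "0 \<le> nx P x \<psi>" unfolding nx_def by (simp add: sum_nonneg)

lemma ipx_bound:
  assumes "t > 0"
  shows "cmod (ipx P x \<psi> \<phi>) \<le> (t * nx P x \<psi> + nx P x \<phi> / t) / 2"
proof -
  have "cmod (ipx P x \<psi> \<phi>) \<le> (\<Sum>p\<in>P. cmod (cnj (\<psi> (x, p)) * \<phi> (x, p)))"
    unfolding ipx_def by (rule norm_sum)
  also have "\<dots> \<le> (\<Sum>p\<in>P. (t * (cmod (\<psi> (x, p)))\<^sup>2 + (cmod (\<phi> (x, p)))\<^sup>2 / t) / 2)"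
  proof (rule sum_mono)
    fix p
    let ?a = "cmod (\<psi> (x, p))" and ?b = "cmod (\<phi> (x, p))"
    have "0 \<le> (t * ?a - ?b)\<^sup>2" by simp
    hence h: "2 * t * (?a * ?b) \<le> (t * ?a)\<^sup>2 + ?b\<^sup>2"
      by (simp add: power2_eq_square algebra_simps)
    have e: "(t * ?a\<^sup>2 + ?b\<^sup>2 / t) / 2 = ((t * ?a)\<^sup>2 + ?b\<^sup>2) / (2 * t)"
      using assms by (simp add: field_simps power2_eq_square)
    have "?a * ?b = (2 * t * (?a * ?b)) / (2 * t)" using assms by simp
    also have "\<dots> \<le> ((t * ?a)\<^sup>2 + ?b\<^sup>2) / (2 * t)"
      using h assms by (intro divide_right_mono) auto
    finally have "?a * ?b \<le> (t * ?a\<^sup>2 + ?b\<^sup>2 / t) / 2" unfolding e .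
    thus "cmod (cnj (\<psi> (x, p)) * \<phi> (x, p)) \<le> (t * ?a\<^sup>2 + ?b\<^sup>2 / t) / 2"
      by (simp add: norm_mult)
  qed
  also have "\<dots> = (t * nx P x \<psi> + nx P x \<phi> / t) / 2"
    unfolding nx_def by (simp add: sum_divide_distrib[symmetric] sum_distrib_left sum.distrib[symmetric]; simp add: sum.distrib sum_divide_distrib)
  finally show ?thesis .
qed

lemma query_apply: "query_op F \<psi> (x, p) = \<psi> (x, xor_bits (fst p) (F x), snd p)"
  unfolding query_op_def by (cases p) auto

lemma nx_query:
  assumes "length (F x) = L"
  shows "nx (ZW L W) x (query_op F \<psi>) = nx (ZW L W) x \<psi>"
  unfolding nx_def query_apply
  using ZW_reindex[OF assms, where W=W and h="\<lambda>p. (cmod (\<psi> (x, p)))\<^sup>2"] by simp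

lemma ipx_query_same:
  assumes "length (F x) = L" "G x = F x"
  shows "ipx (ZW L W) x (query_op F \<psi>) (query_op G \<phi>) = ipx (ZW L W) x \<psi> \<phi>"
  unfolding ipx_def query_apply
  using ZW_reindex[OF assms(1), where W=W and h="\<lambda>p. cnj (\<psi> (x, p)) * \<phi> (x, p)"] assms(2) by simp


lemma nrm_query:
  assumes "finite X" "\<forall>x\<in>X. length (F x) = L"
  shows "nrm (X \<times> ZW L W) (query_op F \<psi>) = nrm (X \<times> ZW L W) \<psi>"
  using assms by (simp add: nrm_split fin_ZW nx_query)

lemma query_step:
  assumes X: "finite X" and F: "\<forall>x\<in>X. length (F x) = L" and G: "\<forall>x\<in>X. length (G x) = L"
    and H: "H \<subseteq> X" "\<forall>x\<in>X - H. F x = G x" and t: "t > 0"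
  shows "cmod (ip (X \<times> ZW L W) (query_op F \<psi>) (query_op G \<phi>)) \<ge>
         cmod (ip (X \<times> ZW L W) \<psi> \<phi>) - (\<Sum>x\<in>H. t * nx (ZW L W) x \<psi> + nx (ZW L W) x \<phi> / t)"
proof -
  let ?P = "ZW L W"
  let ?d = "\<lambda>x. ipx ?P x (query_op F \<psi>) (query_op G \<phi>) - ipx ?P x \<psi> \<phi>"
  have fH: "finite H" using H X finite_subset by auto
  have "ip (X \<times> ?P) (query_op F \<psi>) (query_op G \<phi>) - ip (X \<times> ?P) \<psi> \<phi> = (\<Sum>x\<in>X. ?d x)"
    using X by (simp add: ip_split fin_ZW sum_subtractf)
  also have "\<dots> = (\<Sum>x\<in>H. ?d x)"
    apply (rule sum.mono_neutral_right[OF X H(1)])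
    using H(2) F by (auto simp: ipx_query_same)
  finally have eq: "ip (X \<times> ?P) (query_op F \<psi>) (query_op G \<phi>) - ip (X \<times> ?P) \<psi> \<phi> = (\<Sum>x\<in>H. ?d x)" .
  have "cmod (\<Sum>x\<in>H. ?d x) \<le> (\<Sum>x\<in>H. cmod (?d x))" by (rule norm_sum)
  also have "\<dots> \<le> (\<Sum>x\<in>H. t * nx ?P x \<psi> + nx ?P x \<phi> / t)"
  proof (rule sum_mono)
    fix x assume xH: "x \<in> H"
    have "cmod (?d x) \<le> cmod (ipx ?P x (query_op F \<psi>) (query_op G \<phi>)) + cmod (ipx ?P x \<psi> \<phi>)"
      by (rule norm_triangle_ineq4)
    also have "\<dots> \<le> (t * nx ?P x (query_op F \<psi>) + nx ?P x (query_op G \<phi>) / t) / 2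
                   + (t * nx ?P x \<psi> + nx ?P x \<phi> / t) / 2"
      by (intro add_mono ipx_bound t)
    also have "\<dots> = t * nx ?P x \<psi> + nx ?P x \<phi> / t"
      using xH H F G by (auto simp: nx_query)
    finally show "cmod (?d x) \<le> t * nx ?P x \<psi> + nx ?P x \<phi> / t" .
  qed
  finally have b: "cmod (\<Sum>x\<in>H. ?d x) \<le> (\<Sum>x\<in>H. t * nx ?P x \<psi> + nx ?P x \<phi> / t)" .
  have "cmod (ip (X \<times> ?P) \<psi> \<phi>) \<le> cmod (ip (X \<times> ?P) (query_op F \<psi>) (query_op G \<phi>))
          + cmod (ip (X \<times> ?P) (query_op F \<psi>) (query_op G \<phi>) - ip (X \<times> ?P) \<psi> \<phi>)"
    by (metis norm_minus_commute norm_triangle_sub)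
  then show ?thesis using b unfolding eq by linarith
qed


lemma run_nrm:
  assumes X: "finite X"
  shows "\<forall>x\<in>X. length (F x) = L \<Longrightarrow> \<forall>U\<in>set Us. unitary_on (X \<times> ZW L W) U \<Longrightarrow>
    nrm (X \<times> ZW L W) (run (X \<times> ZW L W) F Us \<psi>) = nrm (X \<times> ZW L W) \<psi>"
proof (induction "X \<times> ZW L W" F Us \<psi> rule: run.induct)
  case (1 F \<psi>) then show ?case by simp
next
  case (2 F U \<psi>) then show ?case using X fin_ZW by (simp add: unitary_nrm)
next
  case (3 F U V Us \<psi>)
  have fB: "finite (X \<times> ZW L W)" using X fin_ZW by simp
  from 3 show ?case
    by (simp add: unitary_nrm[OF fB] nrm_query[OF X])
qed

lemma potential:
  fixes FF GG :: "'r \<Rightarrow> bool list \<Rightarrow> bool list"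
  assumes X: "finite X" and R: "finite R"
    and FF: "\<forall>r\<in>R. \<forall>x\<in>X. length (FF r x) = L"
    and GG: "\<forall>r\<in>R. \<forall>x\<in>X. length (GG r x) = L"
    and step: "\<And>\<Psi> \<Phi>. (\<forall>r\<in>R. nrm (X \<times> ZW L W) (\<Psi> (FF r)) = 1 \<and> nrm (X \<times> ZW L W) (\<Phi> (GG r)) = 1) \<Longrightarrow>
       (\<Sum>r\<in>R. cmod (ip (X \<times> ZW L W) (query_op (FF r) (\<Psi> (FF r))) (query_op (GG r) (\<Phi> (GG r)))))
         \<ge> (\<Sum>r\<in>R. cmod (ip (X \<times> ZW L W) (\<Psi> (FF r)) (\<Phi> (GG r)))) - C"
  shows "length Us = Suc T \<Longrightarrow> \<forall>U\<in>set Us. unitary_on (X \<times> ZW L W) U \<Longrightarrow>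
     \<forall>r\<in>R. nrm (X \<times> ZW L W) (\<Psi> (FF r)) = 1 \<and> nrm (X \<times> ZW L W) (\<Phi> (GG r)) = 1 \<Longrightarrow>
     (\<Sum>r\<in>R. cmod (ip (X \<times> ZW L W) (run (X \<times> ZW L W) (FF r) Us (\<Psi> (FF r)))
                                     (run (X \<times> ZW L W) (GG r) Us (\<Phi> (GG r)))))
      \<ge> (\<Sum>r\<in>R. cmod (ip (X \<times> ZW L W) (\<Psi> (FF r)) (\<Phi> (GG r)))) - real T * C"
proof (induction T arbitrary: Us \<Psi> \<Phi>)
  case 0
  then obtain U where Us: "Us = [U]" by (cases Us) auto
  then show ?case using 0 X fin_ZW by (simp add: unitary_ip)
next
  case (Suc T)
  let ?B = "X \<times> ZW L W"
  from Suc.prems(1) obtain U V Us' where Us: "Us = U # V # Us'"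
    by (metis length_Suc_conv)
  have fB: "finite ?B" using X fin_ZW by simp
  have uU: "unitary_on ?B U" using Suc.prems(2) Us by simp
  define \<Psi>1 where "\<Psi>1 = (\<lambda>F. apply_op ?B U (\<Psi> F))"
  define \<Phi>1 where "\<Phi>1 = (\<lambda>F. apply_op ?B U (\<Phi> F))"
  define \<Psi>2 where "\<Psi>2 = (\<lambda>F. query_op F (\<Psi>1 F))"
  define \<Phi>2 where "\<Phi>2 = (\<lambda>F. query_op F (\<Phi>1 F))"
  have n1: "\<forall>r\<in>R. nrm ?B (\<Psi>1 (FF r)) = 1 \<and> nrm ?B (\<Phi>1 (GG r)) = 1"
    using Suc.prems(3) unfolding \<Psi>1_def \<Phi>1_def by (simp add: unitary_nrm[OF fB uU])
  have n2: "\<forall>r\<in>R. nrm ?B (\<Psi>2 (FF r)) = 1 \<and> nrm ?B (\<Phi>2 (GG r)) = 1"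
    using n1 FF GG X unfolding \<Psi>2_def \<Phi>2_def by (simp add: nrm_query)
  have IH: "(\<Sum>r\<in>R. cmod (ip ?B (run ?B (FF r) (V # Us') (\<Psi>2 (FF r))) (run ?B (GG r) (V # Us') (\<Phi>2 (GG r)))))
      \<ge> (\<Sum>r\<in>R. cmod (ip ?B (\<Psi>2 (FF r)) (\<Phi>2 (GG r)))) - real T * C"
    using Suc.IH[of "V # Us'" \<Psi>2 \<Phi>2] Suc.prems(1,2) Us n2 by simp
  have S: "(\<Sum>r\<in>R. cmod (ip ?B (\<Psi>2 (FF r)) (\<Phi>2 (GG r))))
      \<ge> (\<Sum>r\<in>R. cmod (ip ?B (\<Psi>1 (FF r)) (\<Phi>1 (GG r)))) - C"
    using step[of \<Psi>1 \<Phi>1, OF n1] unfolding \<Psi>2_def \<Phi>2_def by simp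
  have E: "(\<Sum>r\<in>R. cmod (ip ?B (\<Psi>1 (FF r)) (\<Phi>1 (GG r)))) = (\<Sum>r\<in>R. cmod (ip ?B (\<Psi> (FF r)) (\<Phi> (GG r))))"
    unfolding \<Psi>1_def \<Phi>1_def by (simp add: unitary_ip[OF fB uU])
  have "run ?B F Us \<psi> = run ?B F (V # Us') (query_op F (apply_op ?B U \<psi>))" for F \<psi>
    using Us by simp
  then show ?case using IH S E unfolding \<Psi>2_def \<Phi>2_def \<Psi>1_def \<Phi>1_def
    by (simp add: algebra_simps)
qed


lemma nrm_nonneg: "0 \<le> nrm S \<psi>" unfolding nrm_def by (simp add: sum_nonneg)

lemma ip_CS: "(cmod (ip S \<psi> \<phi>))\<^sup>2 \<le> nrm S \<psi> * nrm S \<phi>"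
proof -
  have a: "cmod (ip S \<psi> \<phi>) \<le> (\<Sum>b\<in>S. cmod (\<psi> b) * cmod (\<phi> b))"
    unfolding ip_def by (rule order_trans[OF norm_sum]) (simp add: norm_mult)
  have "(cmod (ip S \<psi> \<phi>))\<^sup>2 \<le> (\<Sum>b\<in>S. cmod (\<psi> b) * cmod (\<phi> b))\<^sup>2"
    using a by (simp add: power_mono)
  also have "\<dots> \<le> nrm S \<psi> * nrm S \<phi>"
    unfolding nrm_def by (rule Cauchy_Schwarz_ineq_sum)
  finally show ?thesis .
qed

lemma sq_le_bound: "(0::real) \<le> x \<Longrightarrow> x\<^sup>2 \<le> c\<^sup>2 \<Longrightarrow> 0 \<le> c \<Longrightarrow> x \<le> c"
  using power2_le_imp_le by blast

lemma final_bound: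
  assumes fB: "finite B" and n1: "nrm B \<psi> = 1" and n2: "nrm B \<phi> = 1"
    and p1: "nrm (B \<inter> A) \<psi> \<ge> 3/4" and p2: "nrm (B \<inter> A) \<phi> \<le> 1/4"
  shows "cmod (ip B \<psi> \<phi>) \<le> 7/8"
proof -
  let ?P = "nrm (B \<inter> A) \<psi>" and ?Q = "nrm (B \<inter> A) \<phi>"
  let ?P' = "nrm (B - A) \<psi>" and ?Q' = "nrm (B - A) \<phi>"
  have splitn: "nrm B f = nrm (B \<inter> A) f + nrm (B - A) f" for f
    unfolding nrm_def by (rule sum.Int_Diff[OF fB])
  have spliti: "ip B \<psi> \<phi> = ip (B \<inter> A) \<psi> \<phi> + ip (B - A) \<psi> \<phi>"
    unfolding ip_def by (rule sum.Int_Diff[OF fB])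
  have P': "?P' = 1 - ?P" and Q': "?Q' = 1 - ?Q" using splitn[of \<psi>] splitn[of \<phi>] n1 n2 by linarith+
  define a where "a = cmod (ip (B \<inter> A) \<psi> \<phi>)"
  define b where "b = cmod (ip (B - A) \<psi> \<phi>)"
  define s where "s = sqrt ?P"
  define u where "u = sqrt ?P'"
  define v where "v = sqrt ?Q"
  define w where "w = sqrt ?Q'"
  have nn: "0 \<le> ?P" "0 \<le> ?Q" "0 \<le> ?P'" "0 \<le> ?Q'" by (simp_all add: nrm_nonneg)
  have s2: "s\<^sup>2 = ?P" "u\<^sup>2 = ?P'" "v\<^sup>2 = ?Q" "w\<^sup>2 = ?Q'"
    unfolding s_def u_def v_def w_def by (simp_all add: nn)
  have sp: "0 \<le> s" "0 \<le> u" "0 \<le> v" "0 \<le> w" unfolding s_def u_def v_def w_def by (simp_all add: nn)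
  have ha: "a \<le> s * v"
    apply (rule sq_le_bound) using ip_CS[of "B \<inter> A" \<psi> \<phi>] s2 sp
    by (auto simp: a_def power_mult_distrib)
  have hb: "b \<le> u * w"
    apply (rule sq_le_bound) using ip_CS[of "B - A" \<psi> \<phi>] s2 sp
    by (auto simp: b_def power_mult_distrib)
  have id: "(s * v + u * w)\<^sup>2 + (s * w - u * v)\<^sup>2 = (s\<^sup>2 + u\<^sup>2) * (v\<^sup>2 + w\<^sup>2)"
    by (simp add: power2_eq_square algebra_simps)
  have one: "(s\<^sup>2 + u\<^sup>2) * (v\<^sup>2 + w\<^sup>2) = 1" using s2 P' Q' by simp
  have sw: "s * w \<ge> 3/4"
  proof -
    have "(3/4) * (3/4) \<le> ?P * ?Q'" by (rule mult_mono) (use P' Q' p1 p2 nn in auto)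
    moreover have "(s * w)\<^sup>2 = ?P * ?Q'" by (simp add: power_mult_distrib s2)
    ultimately have "(s * w)\<^sup>2 \<ge> (3/4)\<^sup>2" by (simp add: power2_eq_square)
    then show ?thesis using power2_le_imp_le[of "3/4" "s*w"] sp by simp
  qed
  have uv: "u * v \<le> 1/4"
    apply (rule sq_le_bound) using sp apply simp
  proof -
    have "?P' * ?Q \<le> (1/4) * (1/4)" by (rule mult_mono) (use P' Q' p1 p2 nn in auto)
    moreover have "(u * v)\<^sup>2 = ?P' * ?Q" by (simp add: power_mult_distrib s2)
    ultimately show "(u * v)\<^sup>2 \<le> (1/4)\<^sup>2" by (simp add: power2_eq_square)
  qed simp
  have "(s * w - u * v)\<^sup>2 \<ge> (1/2)\<^sup>2" using sw uv by (intro power_mono) auto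
  hence "(s * v + u * w)\<^sup>2 \<le> (7/8)\<^sup>2" using id one by (simp add: power2_eq_square)
  hence "s * v + u * w \<le> 7/8" by (rule sq_le_bound[rotated]) (use sp in auto)
  moreover have "cmod (ip B \<psi> \<phi>) \<le> a + b" unfolding spliti a_def b_def by (rule norm_triangle_ineq)
  ultimately show ?thesis using ha hb by linarith
qed



definition injP :: "'i set \<Rightarrow> 'p set \<Rightarrow> ('i \<Rightarrow> 'p) set" where
  "injP K Pos = {\<pi> \<in> PiE K (\<lambda>_. Pos). inj_on \<pi> K}"

lemma fin_injP: "finite K \<Longrightarrow> finite Pos \<Longrightarrow> finite (injP K Pos)"
  unfolding injP_def by (rule finite_subset[of _ "PiE K (\<lambda>_. Pos)"]) (auto intro: finite_PiE)

lemma upd_in_injP: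
  assumes "\<pi> \<in> injP K Pos" "i \<in> K" "j \<in> Pos - \<pi> ` (K - {i})"
  shows "\<pi>(i := j) \<in> injP K Pos"
proof -
  have "\<pi>(i := j) \<in> PiE (insert i K) (\<lambda>_. Pos)"
    using assms by (intro PiE_fun_upd) (auto simp: injP_def)
  moreover have "inj_on (\<pi>(i := j)) K"
    using assms unfolding injP_def inj_on_def by auto
  ultimately show ?thesis using assms(2) by (simp add: injP_def insert_absorb)
qed

lemma swap_sum:
  assumes K: "finite K" and Pos: "finite Pos" and i: "i \<in> K"
  shows "(\<Sum>q\<in>Sigma (injP K Pos) (\<lambda>\<pi>. Pos - \<pi> ` (K - {i})). A (fst q)) =
         (\<Sum>q\<in>Sigma (injP K Pos) (\<lambda>\<pi>. Pos - \<pi> ` (K - {i})). A ((fst q)(i := snd q)))"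
proof -
  let ?Q = "Sigma (injP K Pos) (\<lambda>\<pi>. Pos - \<pi> ` (K - {i}))"
  let ?s = "\<lambda>q. ((fst q)(i := snd q), fst q i)"
  have img: "((fst q)(i := snd q)) ` (K - {i}) = fst q ` (K - {i})" for q by auto
  have inv: "?s (?s q) = q" for q by (cases q) auto
  have mem: "?s q \<in> ?Q" if "q \<in> ?Q" for q
  proof -
    obtain \<pi> j where q: "q = (\<pi>, j)" by (cases q)
    have pi: "\<pi> \<in> injP K Pos" and j: "j \<in> Pos - \<pi> ` (K - {i})" using that q by auto
    have "\<pi> i \<in> Pos" using pi i by (auto simp: injP_def)
    moreover have "\<pi> i \<notin> \<pi> ` (K - {i})" using pi i by (auto simp: injP_def inj_on_def)
    ultimately show ?thesis using upd_in_injP[OF pi i j] q img[of q] by auto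
  qed
  show ?thesis
    apply (rule sum.reindex_bij_witness[where i="?s" and j="?s"])
    using inv mem by auto
qed

lemma card_upd_set:
  assumes "\<pi> \<in> injP K Pos" "i \<in> K" "finite K" "finite Pos"
  shows "card (Pos - \<pi> ` (K - {i})) = card Pos - (card K - 1)"
proof -
  have sub: "\<pi> ` (K - {i}) \<subseteq> Pos" using assms by (auto simp: injP_def)
  have inj: "inj_on \<pi> (K - {i})" using assms by (auto simp: injP_def inj_on_def)
  have "card (\<pi> ` (K - {i})) = card K - 1" using card_image[OF inj] assms by simp
  then show ?thesis using card_Diff_subset[OF finite_subset[OF sub assms(4)] sub] by simp
qed

lemma Gpart:
  fixes h :: "('i \<Rightarrow> 'p) \<Rightarrow> 'x \<Rightarrow> real" and bl :: "'x \<Rightarrow> 'p set"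
  assumes K: "finite K" and Pos: "finite Pos" and i: "i \<in> K" and XS: "finite XS"
    and hnn: "\<And>\<pi> x. 0 \<le> h \<pi> x"
    and hupd: "\<And>\<pi> j. \<pi> \<in> injP K Pos \<Longrightarrow> j \<in> Pos - \<pi> ` (K - {i}) \<Longrightarrow> h (\<pi>(i := j)) = h \<pi>"
    and hsum: "\<And>\<pi>. \<pi> \<in> injP K Pos \<Longrightarrow> (\<Sum>x\<in>XS. h \<pi> x) = 1"
    and bl: "\<And>x. x \<in> XS \<Longrightarrow> finite (bl x) \<and> card (bl x) \<le> d"
  shows "real (card Pos - (card K - 1)) * (\<Sum>\<pi>\<in>injP K Pos. \<Sum>x\<in>XS. if \<pi> i \<in> bl x then h \<pi> x else 0)
         \<le> real d * card (injP K Pos)"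
proof -
  let ?P = "injP K Pos"
  let ?J = "\<lambda>\<pi>. Pos - \<pi> ` (K - {i})"
  let ?Q = "Sigma ?P ?J"
  define A where "A = (\<lambda>\<pi>. \<Sum>x\<in>XS. if \<pi> i \<in> bl x then h \<pi> x else 0)"
  have fP: "finite ?P" using fin_injP K Pos by blast
  have fJ: "finite (?J \<pi>)" for \<pi> using Pos by simp
  have "real (card Pos - (card K - 1)) * (\<Sum>\<pi>\<in>?P. A \<pi>) = (\<Sum>\<pi>\<in>?P. real (card (?J \<pi>)) * A \<pi>)"
    by (simp add: sum_distrib_left card_upd_set[OF _ i K Pos])
  also have "\<dots> = (\<Sum>\<pi>\<in>?P. \<Sum>j\<in>?J \<pi>. A \<pi>)" by simp
  also have "\<dots> = (\<Sum>q\<in>?Q. A (fst q))"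
    using sum.Sigma[OF fP, of ?J "\<lambda>\<pi> j. A \<pi>"] fJ by (simp add: split_def)
  also have "\<dots> = (\<Sum>q\<in>?Q. A ((fst q)(i := snd q)))" by (rule swap_sum[OF K Pos i])
  also have "\<dots> = (\<Sum>\<pi>\<in>?P. \<Sum>j\<in>?J \<pi>. A (\<pi>(i := j)))"
    using sum.Sigma[OF fP, of ?J "\<lambda>\<pi> j. A (\<pi>(i := j))"] fJ by (simp add: split_def)
  also have "\<dots> = (\<Sum>\<pi>\<in>?P. \<Sum>j\<in>?J \<pi>. \<Sum>x\<in>XS. if j \<in> bl x then h \<pi> x else 0)"
    unfolding A_def by (intro sum.cong refl) (simp add: hupd)
  also have "\<dots> = (\<Sum>\<pi>\<in>?P. \<Sum>x\<in>XS. h \<pi> x * real (card {j \<in> ?J \<pi>. j \<in> bl x}))"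
    apply (rule sum.cong[OF refl])
    apply (subst sum.swap)
    apply (rule sum.cong[OF refl])
    using fJ by (simp add: sum.If_cases Int_def set_diff_eq conj_assoc)
  also have "\<dots> \<le> (\<Sum>\<pi>\<in>?P. \<Sum>x\<in>XS. h \<pi> x * real d)"
  proof (intro sum_mono mult_left_mono hnn)
    fix \<pi> x assume x: "x \<in> XS"
    have "card {j \<in> ?J \<pi>. j \<in> bl x} \<le> card (bl x)"
      using bl[OF x] by (intro card_mono) auto
    then show "real (card {j \<in> ?J \<pi>. j \<in> bl x}) \<le> real d" using bl[OF x] by simp
  qed
  also have "\<dots> = real d * card ?P"
    by (simp add: sum_distrib_right[symmetric] hsum)
  finally show ?thesis unfolding A_def .
qed

lemma Fpart:
  fixes g :: "('i \<Rightarrow> 'p) \<Rightarrow> 'x \<Rightarrow> real" and bl :: "'x \<Rightarrow> 'p set"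
  assumes K: "finite K" and Pos: "finite Pos" and XS: "finite XS"
    and gnn: "\<And>\<pi> x. 0 \<le> g \<pi> x"
    and gsum: "\<And>\<pi>. \<pi> \<in> injP K Pos \<Longrightarrow> (\<Sum>x\<in>XS. g \<pi> x) = 1"
    and bl: "\<And>x. x \<in> XS \<Longrightarrow> finite (bl x) \<and> card (bl x) \<le> d"
  shows "(\<Sum>\<pi>\<in>injP K Pos. \<Sum>i\<in>K. \<Sum>x\<in>XS. if \<pi> i \<in> bl x then g \<pi> x else 0)
         \<le> real (min d (card K)) * card (injP K Pos)"
proof -
  let ?P = "injP K Pos"
  have "(\<Sum>\<pi>\<in>?P. \<Sum>i\<in>K. \<Sum>x\<in>XS. if \<pi> i \<in> bl x then g \<pi> x else 0)
      = (\<Sum>\<pi>\<in>?P. \<Sum>x\<in>XS. g \<pi> x * real (card {i \<in> K. \<pi> i \<in> bl x}))"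
    apply (rule sum.cong[OF refl])
    apply (subst sum.swap)
    apply (rule sum.cong[OF refl])
    using K by (simp add: sum.If_cases Int_def)
  also have "\<dots> \<le> (\<Sum>\<pi>\<in>?P. \<Sum>x\<in>XS. g \<pi> x * real (min d (card K)))"
  proof (intro sum_mono mult_left_mono gnn)
    fix \<pi> x assume pi: "\<pi> \<in> ?P" and x: "x \<in> XS"
    have c1: "card {i \<in> K. \<pi> i \<in> bl x} \<le> card K" using K by (intro card_mono) auto
    have inj: "inj_on \<pi> {i \<in> K. \<pi> i \<in> bl x}" using pi by (auto simp: injP_def inj_on_def)
    have "card {i \<in> K. \<pi> i \<in> bl x} = card (\<pi> ` {i \<in> K. \<pi> i \<in> bl x})"
      using card_image[OF inj] by simp
    also have "\<dots> \<le> card (bl x)" using bl[OF x] by (intro card_mono) auto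
    finally have c2: "card {i \<in> K. \<pi> i \<in> bl x} \<le> d" using bl[OF x] by simp
    show "real (card {i \<in> K. \<pi> i \<in> bl x}) \<le> real (min d (card K))" using c1 c2 by simp
  qed
  also have "\<dots> = real (min d (card K)) * card ?P"
    by (simp add: sum_distrib_right[symmetric] gsum)
  finally show ?thesis .
qed



definition fpl :: "bool list list \<Rightarrow> bool list \<Rightarrow> nat set \<Rightarrow> (nat \<Rightarrow> bool list) \<Rightarrow> bool list \<Rightarrow> bool list" where
  "fpl ys e S \<pi> x = (if \<exists>i\<in>S. \<pi> i = x then ys ! (SOME i. i \<in> S \<and> \<pi> i = x) else e)"

lemma fpl_cong: "\<forall>i\<in>S. \<pi> i = \<pi>' i \<Longrightarrow> fpl ys e S \<pi> = fpl ys e S \<pi>'"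
proof (rule ext)
  fix x assume a: "\<forall>i\<in>S. \<pi> i = \<pi>' i"
  have "(\<lambda>i. i \<in> S \<and> \<pi> i = x) = (\<lambda>i. i \<in> S \<and> \<pi>' i = x)" using a by auto
  then show "fpl ys e S \<pi> x = fpl ys e S \<pi>' x" unfolding fpl_def using a by auto
qed

lemma fpl_len:
  assumes "S \<subseteq> {..<length ys}" "\<forall>y\<in>set ys. length y = m" "length e = m"
  shows "length (fpl ys e S \<pi> x) = m"
proof (cases "\<exists>i\<in>S. \<pi> i = x")
  case True
  then have "(SOME i. i \<in> S \<and> \<pi> i = x) \<in> S" by (metis (mono_tags, lifting) someI_ex)
  then show ?thesis using True assms unfolding fpl_def by auto
qed (use assms in \<open>auto simp: fpl_def\<close>)

lemma fpl_at:
  assumes "inj_on \<pi> S" "j \<in> S"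
  shows "fpl ys e S \<pi> (\<pi> j) = ys ! j"
proof -
  have "(SOME i. i \<in> S \<and> \<pi> i = \<pi> j) = j"
    using assms by (intro some_equality) (auto simp: inj_on_def)
  then show ?thesis using assms unfolding fpl_def by auto
qed

lemma fpl_out: "x \<notin> \<pi> ` S \<Longrightarrow> fpl ys e S \<pi> x = e"
  unfolding fpl_def by auto

lemma fpl_diff:
  assumes inj: "inj_on \<pi> K" and i: "i \<in> K" and x: "x \<noteq> \<pi> i"
  shows "fpl ys e K \<pi> x = fpl ys e (K - {i}) \<pi> x"
proof (cases "x \<in> \<pi> ` K")
  case True
  then obtain j where j: "j \<in> K" "x = \<pi> j" by auto
  have "j \<noteq> i" using j x by auto
  then show ?thesis using j inj fpl_at[of \<pi> K j] fpl_at[of \<pi> "K - {i}" j]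
    by (simp add: inj_on_diff)
next
  case False
  then have "x \<notin> \<pi> ` (K - {i})" by auto
  then show ?thesis using False fpl_out[of x \<pi> K] fpl_out[of x \<pi> "K - {i}"] by simp
qed

lemma blocks_len: "length x = d * n \<Longrightarrow> length (blocks d n x) = d \<and> (\<forall>b\<in>set (blocks d n x). length b = n)"
proof (induction d arbitrary: x)
  case 0 then show ?case by simp
next
  case (Suc d)
  have "length (drop n x) = d * n" using Suc.prems by simp
  then show ?case using Suc.IH[of "drop n x"] Suc.prems by auto
qed

lemma tensor_len:
  assumes f: "valid_fun n m f" and x: "length x = d * n"
  shows "length (tensor_fun d n f x) = d * m"
proof -
  have bl: "length (blocks d n x) = d" "\<forall>b\<in>set (blocks d n x). length b = n"
    using blocks_len[OF x] by auto
  have "length (tensor_fun d n f x) = (\<Sum>b\<leftarrow>blocks d n x. length (f b))"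
    unfolding tensor_fun_def by (simp add: length_concat comp_def)
  also have "\<dots> = (\<Sum>b\<leftarrow>blocks d n x. m)"
    by (rule arg_cong[where f=sum_list], rule map_cong) (use bl f in \<open>auto simp: valid_fun_def\<close>)
  also have "\<dots> = d * m" using bl(1) by (simp add: sum_list_triv)
  finally show ?thesis .
qed

lemma tensor_cong: "\<forall>b\<in>set (blocks d n x). f b = g b \<Longrightarrow> tensor_fun d n f x = tensor_fun d n g x"
  unfolding tensor_fun_def by (rule arg_cong[where f=concat], rule map_cong) auto

lemma bl_card: "finite (set (blocks d n x)) \<and> card (set (blocks d n x)) \<le> length (blocks d n x)"
  by (simp add: card_length)


lemma img_all:
  assumes pi: "\<pi> \<in> injP {..<k} {x. length x = n}" and ys: "length ys = k"
  shows "set ys \<subseteq> image_fun n (fpl ys e {..<k} \<pi>)"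
proof
  fix y assume "y \<in> set ys"
  then obtain j where j: "j < k" "y = ys ! j" using ys by (auto simp: in_set_conv_nth)
  have inj: "inj_on \<pi> {..<k}" and len: "length (\<pi> j) = n" using pi j by (auto simp: injP_def)
  have "fpl ys e {..<k} \<pi> (\<pi> j) = y" using fpl_at[OF inj] j by simp
  then show "y \<in> image_fun n (fpl ys e {..<k} \<pi>)" unfolding image_fun_def using len by force
qed

lemma img_miss:
  assumes pi: "\<pi> \<in> injP {..<k} {x. length x = n}" and ys: "length ys = k" "distinct ys"
    and e: "e \<notin> set ys" and i: "i < k"
  shows "card (set ys \<inter> image_fun n (fpl ys e ({..<k} - {i}) \<pi>)) = k - 1"
proof -
  have inj: "inj_on \<pi> ({..<k} - {i})" using pi by (auto simp: injP_def inj_on_def)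
  have "set ys \<inter> image_fun n (fpl ys e ({..<k} - {i}) \<pi>) = (\<lambda>j. ys ! j) ` ({..<k} - {i})"
  proof
    show "set ys \<inter> image_fun n (fpl ys e ({..<k} - {i}) \<pi>) \<subseteq> (\<lambda>j. ys ! j) ` ({..<k} - {i})"
    proof
      fix y assume y: "y \<in> set ys \<inter> image_fun n (fpl ys e ({..<k} - {i}) \<pi>)"
      then obtain x where x: "y = fpl ys e ({..<k} - {i}) \<pi> x" unfolding image_fun_def by auto
      show "y \<in> (\<lambda>j. ys ! j) ` ({..<k} - {i})"
      proof (cases "x \<in> \<pi> ` ({..<k} - {i})")
        case True
        then obtain j where j: "j \<in> {..<k} - {i}" "x = \<pi> j" by auto
        then show ?thesis using x fpl_at[OF inj j(1)] by auto
      next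
        case False
        then show ?thesis using x fpl_out[OF False] y e by auto
      qed
    qed
  next
    show "(\<lambda>j. ys ! j) ` ({..<k} - {i}) \<subseteq> set ys \<inter> image_fun n (fpl ys e ({..<k} - {i}) \<pi>)"
    proof
      fix y assume "y \<in> (\<lambda>j. ys ! j) ` ({..<k} - {i})"
      then obtain j where j: "j \<in> {..<k} - {i}" "y = ys ! j" by auto
      have len: "length (\<pi> j) = n" using pi j by (auto simp: injP_def)
      have "fpl ys e ({..<k} - {i}) \<pi> (\<pi> j) = y" using fpl_at[OF inj j(1)] j by simp
      then show "y \<in> set ys \<inter> image_fun n (fpl ys e ({..<k} - {i}) \<pi>)"
        unfolding image_fun_def using len j ys by force
    qed
  qed
  moreover have "inj_on (\<lambda>j. ys ! j) ({..<k} - {i})"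
    using ys by (auto simp: inj_on_def nth_eq_iff_index_eq)
  ultimately have "card (set ys \<inter> image_fun n (fpl ys e ({..<k} - {i}) \<pi>)) = card ({..<k} - {i})"
    by (simp add: card_image)
  then show ?thesis using i by simp
qed

lemma exists_items:
  assumes "0 < m" "k \<le> 2 ^ (m - 1)"
  obtains ys e where "valid_items m k ys" "length e = m" "e \<notin> set ys"
proof -
  let ?Y = "{y::bool list. length y = m}"
  have cY: "card ?Y = 2 ^ m" by (rule card_len)
  have "(2::nat) ^ (m - 1) < 2 ^ m" using assms(1) by simp
  then have lt: "k < card ?Y" using cY assms(2) by linarith
  obtain A where A: "A \<subseteq> ?Y" "card A = k" "finite A"
    using obtain_subset_with_card_n[of k ?Y] lt by auto
  obtain ys where ysd: "set ys = A" "distinct ys" using finite_distinct_list[OF A(3)] by auto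
  have "?Y - A \<noteq> {}"
  proof
    assume "?Y - A = {}"
    then have "?Y \<subseteq> A" by auto
    then have "card ?Y \<le> card A" using A(3) card_mono by blast
    then show False using lt A(2) by simp
  qed
  then obtain e where e: "e \<in> ?Y" "e \<notin> A" by auto
  have "valid_items m k ys" unfolding valid_items_def using ysd A distinct_card by fastforce
  then show ?thesis using that e ysd by auto
qed

lemma exists_inj:
  assumes "finite Pos" "k \<le> card Pos"
  shows "injP {..<k} Pos \<noteq> {}"
proof -
  obtain A where A: "A \<subseteq> Pos" "card A = k" "finite A"
    using obtain_subset_with_card_n[of k Pos] assms by auto
  obtain qs where qs: "set qs = A" "distinct qs" using finite_distinct_list[OF A(3)] by auto
  have lq: "length qs = k" using qs A distinct_card by fastforce
  have "restrict (\<lambda>i. qs ! i) {..<k} \<in> injP {..<k} Pos"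
    unfolding injP_def using qs lq A by (auto simp: inj_on_def nth_eq_iff_index_eq)
  then show ?thesis by auto
qed



lemma arith_final:
  fixes k d l M N p T t :: real
  assumes k: "k > 0" and d: "d > 0" and l: "l > 0" and M: "M > 0" and N: "N \<le> 2 * M"
    and p: "p > 0" and T: "T \<ge> 0"
    and t: "t = sqrt (k * d / (M * l))"
    and h: "k * p / 8 \<le> T * (t * l * p + d * k * p / (t * M))"
  shows "T \<ge> (1/32) * sqrt (N * k / (d * l))"
proof -
  have tpos: "t > 0" using t k d l M by simp
  have t2: "t\<^sup>2 = k * d / (M * l)" using t k d l M by simp
  have e: "d * k * p / (t * M) = t * l * p"
  proof -
    have "d * k = t\<^sup>2 * (M * l)" using t2 M l by (simp add: field_simps)
    then show ?thesis using tpos M by (simp add: field_simps power2_eq_square)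
  qed
  have "k * p / 8 \<le> (2 * T * t * l) * p" using h unfolding e by (simp add: algebra_simps)
  then have h2: "k / 8 \<le> 2 * T * t * l" using p by (simp add: field_simps)
  have "(k / 8)\<^sup>2 \<le> (2 * T * t * l)\<^sup>2" using h2 k by (intro power_mono) auto
  also have "\<dots> = 4 * T\<^sup>2 * l\<^sup>2 * t\<^sup>2" by (simp add: power_mult_distrib)
  also have "\<dots> = 4 * T\<^sup>2 * (k * d * l / M)"
    unfolding t2 using l by (simp add: field_simps power2_eq_square)
  finally have h3: "k\<^sup>2 / 64 \<le> 4 * T\<^sup>2 * (k * d * l / M)" by (simp add: power_divide)
  have h4: "k * M / (256 * d * l) \<le> T\<^sup>2"
  proof -
    have "k\<^sup>2 * M \<le> 256 * T\<^sup>2 * (k * d * l)" using h3 M by (simp add: field_simps)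
    then have "k * M \<le> 256 * T\<^sup>2 * (d * l)" using k by (simp add: power2_eq_square field_simps)
    then show ?thesis using d l by (simp add: field_simps)
  qed
  have h5: "N * k / (d * l) / 1024 \<le> T\<^sup>2"
  proof -
    have "N * k / (d * l) / 1024 \<le> (2 * M) * k / (d * l) / 1024"
      using N k d l by (intro divide_right_mono mult_right_mono) auto
    also have "\<dots> \<le> k * M / (256 * d * l)" using k d l M by (simp add: field_simps)
    finally show ?thesis using h4 by linarith
  qed
  have "(1/32) * sqrt (N * k / (d * l)) = sqrt (N * k / (d * l) / 1024)"
  proof -
    have s: "sqrt (1024::real) = 32" by (rule real_sqrt_unique) auto
    show ?thesis unfolding real_sqrt_divide[of _ 1024] s by simp
  qed
  also have "\<dots> \<le> sqrt (T\<^sup>2)" using h5 by (rule real_sqrt_le_mono)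
  also have "\<dots> = T" using T by simp
  finally show ?thesis .
qed



lemma init_nrm:
  assumes "1 \<le> W"
  shows "nrm (Defs.Basis d n m W) (init_state d n m) = 1"
proof -
  let ?b0 = "(replicate (d * n) False, replicate (d * m) False, 0::nat)"
  have b0: "?b0 \<in> Defs.Basis d n m W" using assms by (simp add: Basis_def)
  have "nrm (Defs.Basis d n m W) (init_state d n m) = (\<Sum>b\<in>Defs.Basis d n m W. if b = ?b0 then 1 else 0)"
    unfolding nrm_def init_state_def by (intro sum.cong refl) auto
  also have "\<dots> = 1" using b0 fin_Basis by simp
  finally show ?thesis .
qed

lemma main:
  assumes n: "0 < n" and m: "0 < m" and d: "0 < d" and k: "0 < k" and km: "k \<le> 2 ^ (m - 1)"
    and kN: "real k \<le> sqrt (2 ^ n)"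
    and sol: "solves n m d k T W Us acc"
  shows "real T \<ge> (1/32) * sqrt (2 ^ n * real k / (real d * real (min d k)))"
proof -
  obtain ys e where ys: "valid_items m k ys" and e: "length e = m" "e \<notin> set ys"
    using exists_items[OF m km] by blast
  have ysl: "length ys = k" "distinct ys" "\<forall>y\<in>set ys. length y = m"
    using ys by (auto simp: valid_items_def)
  define W' where "W' = W ys"
  define U where "U = Us ys"
  define A where "A = acc ys"
  have W': "1 \<le> W'" and lenU: "length U = Suc T" and uni: "\<forall>u\<in>set U. unitary_on (Defs.Basis d n m W') u"
    using sol ys unfolding solves_def W'_def U_def by auto
  have accp: "\<And>f. valid_fun n m f \<Longrightarrow>
           (set ys \<subseteq> image_fun n f \<longrightarrow> accept_prob d n m W' f U A \<ge> 3/4) \<and>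
           (card (set ys \<inter> image_fun n f) = k - 1 \<longrightarrow> accept_prob d n m W' f U A \<le> 1/4)"
    using sol ys unfolding solves_def W'_def U_def A_def by blast
  define N where "N = (2::nat) ^ n"
  define Pos where "Pos = {x::bool list. length x = n}"
  define XS where "XS = {x::bool list. length x = d * n}"
  define K where "K = {..<k}"
  define P where "P = injP K Pos"
  define L where "L = d * m"
  define B where "B = XS \<times> ZW L W'"
  have BB: "Defs.Basis d n m W' = B" unfolding B_def XS_def L_def by (rule Basis_eq)
  have cPos: "card Pos = N" unfolding Pos_def N_def by (rule card_len)
  have fPos: "finite Pos" unfolding Pos_def by (rule fin_len)
  have fXS: "finite XS" unfolding XS_def by (rule fin_len)
  have fK: "finite K" and cK: "card K = k" unfolding K_def by auto
  have fB: "finite B" unfolding B_def using fXS fin_ZW by simp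
  have kk: "k * k \<le> N"
  proof -
    have "(real k)\<^sup>2 \<le> (sqrt (2 ^ n))\<^sup>2" using kN by (intro power_mono) auto
    then have "real (k * k) \<le> real N" unfolding N_def by (simp add: power2_eq_square)
    then show ?thesis by linarith
  qed
  have "k \<le> k * k" using k by simp
  then have kleN: "k \<le> N" using kk by linarith
  have N2: "N \<le> 2 * (N - (k - 1))"
  proof (cases "k \<le> 1")
    case True then show ?thesis by simp
  next
    case False
    then have "2 \<le> k" by simp
    then have "2 * k \<le> k * k" by (rule mult_right_mono) simp
    then show ?thesis using kk by linarith
  qed
  have fP: "finite P" unfolding P_def using fin_injP fK fPos by blast
  have P0: "P \<noteq> {}" unfolding P_def K_def using exists_inj[OF fPos] kleN cPos by simp
  have cP: "card P > 0" using fP P0 by (simp add: card_gt_0_iff)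
  define R where "R = P \<times> K"
  have fR: "finite R" unfolding R_def using fP fK by simp
  define FF where "FF = (\<lambda>r::(nat \<Rightarrow> bool list) \<times> nat. tensor_fun d n (fpl ys e K (fst r)))"
  define GG where "GG = (\<lambda>r::(nat \<Rightarrow> bool list) \<times> nat. tensor_fun d n (fpl ys e (K - {snd r}) (fst r)))"
  have vf: "valid_fun n m (fpl ys e S \<pi>)" if "S \<subseteq> K" for S \<pi>
    unfolding valid_fun_def using fpl_len[of S ys m e] that ysl e unfolding K_def by auto
  have FFl: "\<forall>r\<in>R. \<forall>x\<in>XS. length (FF r x) = L"
  proof (intro ballI)
    fix r x assume "x \<in> XS"
    then show "length (FF r x) = L" unfolding FF_def L_def
      using tensor_len[OF vf[OF order_refl]] XS_def by simp
  qed
  have GGl: "\<forall>r\<in>R. \<forall>x\<in>XS. length (GG r x) = L"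
  proof (intro ballI)
    fix r x assume "x \<in> XS"
    then show "length (GG r x) = L" unfolding GG_def L_def
      using tensor_len[OF vf[OF Diff_subset]] XS_def by simp
  qed

  define l where "l = real (min d k)"
  define M' where "M' = real (N - (k - 1))"
  define p where "p = real (card P)"
  define t where "t = sqrt (real k * real d / (M' * l))"
  have lpos: "l > 0" unfolding l_def using d k by simp
  have Mpos: "M' > 0" unfolding M'_def using kleN k by simp
  have ppos: "p > 0" unfolding p_def using cP by simp
  have tpos: "t > 0" unfolding t_def using lpos Mpos d k by simp
  define C where "C = t * l * p + real d * real k * p / (t * M')"
  have bl: "\<And>x. x \<in> XS \<Longrightarrow> finite (set (blocks d n x)) \<and> card (set (blocks d n x)) \<le> d"
  proof -
    fix x assume "x \<in> XS"
    then have "length (blocks d n x) = d" using blocks_len[of x d n] unfolding XS_def by simp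
    then show "finite (set (blocks d n x)) \<and> card (set (blocks d n x)) \<le> d" using bl_card[of d n x] by simp
  qed
  have RP: "\<And>F. (\<Sum>r\<in>R. F r) = (\<Sum>\<pi>\<in>P. \<Sum>i\<in>K. F (\<pi>, i))"
    unfolding R_def by (simp add: sum.cartesian_product case_prod_eta)
  have step: "(\<Sum>r\<in>R. cmod (ip B (query_op (FF r) (\<Psi> (FF r))) (query_op (GG r) (\<Phi> (GG r)))))
         \<ge> (\<Sum>r\<in>R. cmod (ip B (\<Psi> (FF r)) (\<Phi> (GG r)))) - C"
    if norm: "\<forall>r\<in>R. nrm B (\<Psi> (FF r)) = 1 \<and> nrm B (\<Phi> (GG r)) = 1" for \<Psi> \<Phi>
  proof -
    define H where "H = (\<lambda>r::(nat \<Rightarrow> bool list) \<times> nat. {x \<in> XS. fst r (snd r) \<in> set (blocks d n x)})"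
    define nf where "nf = (\<lambda>r x. nx (ZW L W') x (\<Psi> (FF r)))"
    define ng where "ng = (\<lambda>r x. nx (ZW L W') x (\<Phi> (GG r)))"
    have each: "cmod (ip B (query_op (FF r) (\<Psi> (FF r))) (query_op (GG r) (\<Phi> (GG r))))
        \<ge> cmod (ip B (\<Psi> (FF r)) (\<Phi> (GG r))) - (\<Sum>x\<in>H r. t * nf r x + ng r x / t)" if r: "r \<in> R" for r
    proof -
      obtain \<pi> i where ri: "r = (\<pi>, i)" by (cases r)
      have pi: "\<pi> \<in> P" and i: "i \<in> K" using r ri R_def by auto
      have inj: "inj_on \<pi> K" using pi unfolding P_def injP_def by auto
      have agree: "\<forall>x\<in>XS - H r. FF r x = GG r x"
      proof
        fix x assume x: "x \<in> XS - H r"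
        have "\<forall>b\<in>set (blocks d n x). fpl ys e K \<pi> b = fpl ys e (K - {i}) \<pi> b"
        proof
          fix b assume b: "b \<in> set (blocks d n x)"
          have "\<pi> i \<notin> set (blocks d n x)" using x unfolding H_def ri by auto
          then have "b \<noteq> \<pi> i" using b by auto
          then show "fpl ys e K \<pi> b = fpl ys e (K - {i}) \<pi> b" by (rule fpl_diff[OF inj i])
        qed
        then show "FF r x = GG r x" unfolding FF_def GG_def ri by (simp add: tensor_cong)
      qed
      have Hs: "H r \<subseteq> XS" unfolding H_def by auto
      show ?thesis
        using query_step[OF fXS _ _ Hs agree tpos, of L W' "\<Psi> (FF r)" "\<Phi> (GG r)"] FFl GGl r
        unfolding B_def nf_def ng_def by auto
    qed
    have ifs: "(if c then t * a + b / t else 0) = t * (if c then a else 0) + (if c then b else 0) / t"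
      for c and a b :: real by simp
    have eqH: "(\<Sum>x\<in>H r. t * nf r x + ng r x / t) =
        t * (\<Sum>x\<in>XS. if fst r (snd r) \<in> set (blocks d n x) then nf r x else 0)
        + (\<Sum>x\<in>XS. if fst r (snd r) \<in> set (blocks d n x) then ng r x else 0) / t" for r
      unfolding H_def sum.inter_filter[OF fXS] ifs
      by (simp add: sum.distrib sum_distrib_left sum_divide_distrib)
    define SF where "SF = (\<Sum>\<pi>\<in>P. \<Sum>i\<in>K. \<Sum>x\<in>XS. if \<pi> i \<in> set (blocks d n x) then
                               nx (ZW L W') x (\<Psi> (tensor_fun d n (fpl ys e K \<pi>))) else 0)"
    define SG where "SG = (\<Sum>i\<in>K. \<Sum>\<pi>\<in>P. \<Sum>x\<in>XS. if \<pi> i \<in> set (blocks d n x) then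
                               nx (ZW L W') x (\<Phi> (tensor_fun d n (fpl ys e (K - {i}) \<pi>))) else 0)"
    define AF where "AF = (\<lambda>r. \<Sum>x\<in>XS. if fst r (snd r) \<in> set (blocks d n x) then nf r x else 0)"
    define AG where "AG = (\<lambda>r. \<Sum>x\<in>XS. if fst r (snd r) \<in> set (blocks d n x) then ng r x else 0)"
    have "(\<Sum>r\<in>R. \<Sum>x\<in>H r. t * nf r x + ng r x / t) = (\<Sum>r\<in>R. t * AF r + AG r / t)"
      unfolding AF_def AG_def by (rule sum.cong[OF refl eqH])
    also have "\<dots> = t * (\<Sum>r\<in>R. AF r) + (\<Sum>r\<in>R. AG r) / t"
      by (simp only: sum.distrib sum_distrib_left sum_divide_distrib)
    also have "(\<Sum>r\<in>R. AF r) = SF"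
      unfolding RP SF_def AF_def nf_def FF_def fst_conv snd_conv ..
    also have "(\<Sum>r\<in>R. AG r) = SG"
      unfolding RP SG_def AG_def ng_def GG_def fst_conv snd_conv by (rule sum.swap)
    finally have tot: "(\<Sum>r\<in>R. \<Sum>x\<in>H r. t * nf r x + ng r x / t) = t * SF + SG / t" .
    have k0: "0 \<in> K" unfolding K_def using k by simp
    have SFb: "SF \<le> l * p"
    proof -
      have "SF \<le> real (min d (card K)) * card (injP K Pos)"
        unfolding SF_def P_def
      proof (rule Fpart[OF fK fPos fXS nx_nonneg _ bl])
        fix \<pi> assume "\<pi> \<in> injP K Pos"
        then have "(\<pi>, 0) \<in> R" unfolding R_def P_def using k0 by simp
        then have "nrm B (\<Psi> (FF (\<pi>, 0))) = 1" using norm by blast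
        then show "(\<Sum>x\<in>XS. nx (ZW L W') x (\<Psi> (tensor_fun d n (fpl ys e K \<pi>)))) = 1"
          unfolding B_def FF_def using nrm_split[OF fXS fin_ZW] by simp
      qed auto
      then show ?thesis unfolding l_def p_def P_def cK .
    qed
    have SGb: "SG \<le> real k * (real d * p / M')"
    proof -
      have "SG \<le> (\<Sum>i\<in>K. real d * p / M')"
        unfolding SG_def
      proof (rule sum_mono)
        fix i assume i: "i \<in> K"
        have "real (card Pos - (card K - 1)) * (\<Sum>\<pi>\<in>injP K Pos. \<Sum>x\<in>XS. if \<pi> i \<in> set (blocks d n x) then
                 nx (ZW L W') x (\<Phi> (tensor_fun d n (fpl ys e (K - {i}) \<pi>))) else 0)
              \<le> real d * card (injP K Pos)"
        proof (rule Gpart[OF fK fPos i fXS nx_nonneg _ _ bl])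
          fix \<pi> j assume "\<pi> \<in> injP K Pos" "j \<in> Pos - \<pi> ` (K - {i})"
          have "fpl ys e (K - {i}) (\<pi>(i := j)) = fpl ys e (K - {i}) \<pi>" by (rule fpl_cong) auto
          then show "(\<lambda>x. nx (ZW L W') x (\<Phi> (tensor_fun d n (fpl ys e (K - {i}) (\<pi>(i := j))))))
                   = (\<lambda>x. nx (ZW L W') x (\<Phi> (tensor_fun d n (fpl ys e (K - {i}) \<pi>))))" by simp
        next
          fix \<pi> assume "\<pi> \<in> injP K Pos"
          then have "(\<pi>, i) \<in> R" unfolding R_def P_def using i by simp
          then have "nrm B (\<Phi> (GG (\<pi>, i))) = 1" using norm by blast
          then show "(\<Sum>x\<in>XS. nx (ZW L W') x (\<Phi> (tensor_fun d n (fpl ys e (K - {i}) \<pi>)))) = 1"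
            unfolding B_def GG_def using nrm_split[OF fXS fin_ZW] by simp
        qed auto
        then have "M' * (\<Sum>\<pi>\<in>P. \<Sum>x\<in>XS. if \<pi> i \<in> set (blocks d n x) then
                 nx (ZW L W') x (\<Phi> (tensor_fun d n (fpl ys e (K - {i}) \<pi>))) else 0) \<le> real d * p"
          unfolding M'_def p_def P_def cPos cK .
        then show "(\<Sum>\<pi>\<in>P. \<Sum>x\<in>XS. if \<pi> i \<in> set (blocks d n x) then
                 nx (ZW L W') x (\<Phi> (tensor_fun d n (fpl ys e (K - {i}) \<pi>))) else 0) \<le> real d * p / M'"
          using Mpos by (simp add: field_simps)
      qed
      then show ?thesis using cK by simp
    qed
    have "t * SF + SG / t \<le> t * (l * p) + real k * (real d * p / M') / t"
      using SFb SGb tpos by (intro add_mono mult_left_mono divide_right_mono) auto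
    also have "\<dots> = C" unfolding C_def using tpos Mpos by (simp add: field_simps)
    finally have totb: "(\<Sum>r\<in>R. \<Sum>x\<in>H r. t * nf r x + ng r x / t) \<le> C" unfolding tot .
    have "(\<Sum>r\<in>R. cmod (ip B (\<Psi> (FF r)) (\<Phi> (GG r)))) - (\<Sum>r\<in>R. \<Sum>x\<in>H r. t * nf r x + ng r x / t)
        \<le> (\<Sum>r\<in>R. cmod (ip B (query_op (FF r) (\<Psi> (FF r))) (query_op (GG r) (\<Phi> (GG r)))))"
      unfolding sum_subtractf[symmetric] by (rule sum_mono) (use each in auto)
    then show ?thesis using totb by linarith
  qed

  have uni': "\<forall>u\<in>set U. unitary_on (XS \<times> ZW L W') u" using uni BB B_def by simp
  have init_n: "nrm B (init_state d n m) = 1" using init_nrm[OF W', of d n m] BB by simp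
  have init_n': "nrm (XS \<times> ZW L W') (init_state d n m) = 1" using init_n unfolding B_def .
  have pot: "(\<Sum>r\<in>R. cmod (ip (XS \<times> ZW L W') (run (XS \<times> ZW L W') (FF r) U ((\<lambda>_. init_state d n m) (FF r)))
                                     (run (XS \<times> ZW L W') (GG r) U ((\<lambda>_. init_state d n m) (GG r)))))
      \<ge> (\<Sum>r\<in>R. cmod (ip (XS \<times> ZW L W') ((\<lambda>_. init_state d n m) (FF r)) ((\<lambda>_. init_state d n m) (GG r)))) - real T * C"
    apply (rule potential[OF fXS fR FFl GGl step[unfolded B_def] lenU uni'])
    apply blast
    using init_n' by simp
  have initsum: "(\<Sum>r\<in>R. cmod (ip B (init_state d n m) (init_state d n m))) = real (card R)"
    using init_n by (simp add: ip_self)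
  have fin: "cmod (ip B (run B (FF r) U (init_state d n m)) (run B (GG r) U (init_state d n m))) \<le> 7/8"
    if r: "r \<in> R" for r
  proof -
    obtain \<pi> i where ri: "r = (\<pi>, i)" by (cases r)
    have pi: "\<pi> \<in> injP {..<k} {x. length x = n}" and i: "i < k"
      using r ri unfolding R_def P_def K_def Pos_def by auto
    have n1: "nrm B (run B (FF r) U (init_state d n m)) = 1"
      using run_nrm[OF fXS, of "FF r" L U W' "init_state d n m"] FFl r uni' init_n unfolding B_def by simp
    have n2: "nrm B (run B (GG r) U (init_state d n m)) = 1"
      using run_nrm[OF fXS, of "GG r" L U W' "init_state d n m"] GGl r uni' init_n unfolding B_def by simp
    have ap: "accept_prob d n m W' f U A = nrm (B \<inter> A) (run B (tensor_fun d n f) U (init_state d n m))" for f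
      unfolding accept_prob_def Let_def nrm_def BB ..
    have "set ys \<subseteq> image_fun n (fpl ys e K \<pi>)" unfolding K_def by (rule img_all[OF pi ysl(1)])
    then have p1: "nrm (B \<inter> A) (run B (FF r) U (init_state d n m)) \<ge> 3/4"
      using accp[OF vf[OF order_refl]] ap unfolding FF_def ri by simp
    have "card (set ys \<inter> image_fun n (fpl ys e (K - {i}) \<pi>)) = k - 1"
      unfolding K_def by (rule img_miss[OF pi ysl(1,2) e(2) i])
    then have p2: "nrm (B \<inter> A) (run B (GG r) U (init_state d n m)) \<le> 1/4"
      using accp[OF vf[OF Diff_subset]] ap unfolding GG_def ri by simp
    show ?thesis by (rule final_bound[OF fB n1 n2 p1 p2])
  qed
  have "(\<Sum>r\<in>R. cmod (ip B (run B (FF r) U (init_state d n m)) (run B (GG r) U (init_state d n m))))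
        \<le> (\<Sum>r\<in>R. 7/8)" by (rule sum_mono) (rule fin)
  then have S1: "(\<Sum>r\<in>R. cmod (ip (XS \<times> ZW L W') (run (XS \<times> ZW L W') (FF r) U (init_state d n m))
       (run (XS \<times> ZW L W') (GG r) U (init_state d n m)))) \<le> real (card R) * (7/8)"
    unfolding B_def by simp
  have i1: "cmod (ip (XS \<times> ZW L W') (init_state d n m) (init_state d n m)) = 1"
    using init_n' by (simp add: ip_self)
  have pot': "real (card R) - real T * C \<le> (\<Sum>r\<in>R. cmod (ip (XS \<times> ZW L W') (run (XS \<times> ZW L W') (FF r) U (init_state d n m))
       (run (XS \<times> ZW L W') (GG r) U (init_state d n m))))"
    using pot unfolding i1 by simp
  have "real (card R) - real T * C \<le> real (card R) * (7/8)" using S1 pot' by linarith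
  then have h: "real (card R) / 8 \<le> real T * C" by simp
  have cR: "real (card R) = real k * p" unfolding R_def p_def using fP fK cK by simp
  have h': "real k * p / 8 \<le> real T * (t * l * p + real d * real k * p / (t * M'))"
    using h unfolding cR C_def .
  have NM: "real N \<le> 2 * M'" unfolding M'_def using N2 by linarith
  have "real T \<ge> (1/32) * sqrt (real N * real k / (real d * l))"
    by (rule arith_final[OF _ _ lpos Mpos NM ppos _ t_def h']) (use k d in auto)
  then show ?thesis unfolding N_def l_def by simp
qed


theorem theorem1:
  shows "\<exists>c > (0::real). \<exists>N0::nat. \<forall>n m d k T W Us acc.
     0 < n \<and> 0 < m \<and> 0 < d \<and> 0 < k \<and> k \<le> 2 ^ (m - 1) \<and>
     N0 \<le> 2 ^ n \<and> real d \<le> sqrt (2 ^ n) \<and> real k \<le> sqrt (2 ^ n) \<and>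
     solves n m d k T W Us acc
     \<longrightarrow> real T \<ge> c * sqrt (2 ^ n * real k / (real d * real (min d k)))"
  apply (rule exI[of _ "1/32"])
  apply (rule conjI)
   apply simp
  apply (rule exI[of _ 0])
  apply (intro allI impI)
  subgoal for n m d k T W Us acc
    using main[of n m d k T W Us acc] by blast
  done

end
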